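(* For every integer $n>16$, the generalized Petersen graph $GP(n,3)$ is not $1$-distance-balanced.
   Context: For a connected graph $G$ and $x,y\in V(G)$, $d_G(x,y)$ denotes the distance. Let $W_{xy}=\{w\in V(G): d_G(w,x)<d_G(w,y)\}$. $G$ is called $\ell$-distance-balanced if $|W_{xy}|=|W_{yx}|$ for every pair $x,y\in V(G)$ with $d_G(x,y)=\ell$. For integers $n\ge 3$ and $1\le k<n/2$, the generalized Petersen graph $GP(n,k)$ has vertex set $\{u_i: i\in\mathbb{Z}_n\}\cup\{v_i: i\in\mathbb{Z}_n\}$ and edge set $\{u_iu_{i+1}: i\in\mathbb{Z}_n\}\cup\{v_iv_{i+k}: i\in\mathbb{Z}_n\}\cup\{u_iv_i: i\in\mathbb{Z}_n\}$. *)

theory Defs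
  imports Main
begin

datatype gp_vertex = U nat | V nat

definition gp_verts :: "nat \<Rightarrow> gp_vertex set" where
  "gp_verts n = U ` {..<n} \<union> V ` {..<n}"

definition gp_adj :: "nat \<Rightarrow> nat \<Rightarrow> gp_vertex \<Rightarrow> gp_vertex \<Rightarrow> bool" where
  "gp_adj n k x y \<longleftrightarrow> x \<in> gp_verts n \<and> y \<in> gp_verts n \<and>
     (\<exists>i<n. ({x, y} = {U i, U ((i + 1) mod n)}) \<or>
             ({x, y} = {V i, V ((i + k) mod n)}) \<or>
             ({x, y} = {U i, V i}))"

fun walk :: "'a set \<Rightarrow> ('a \<Rightarrow> 'a \<Rightarrow> bool) \<Rightarrow> nat \<Rightarrow> 'a \<Rightarrow> 'a \<Rightarrow> bool" where
  "walk Vs E 0 x y \<longleftrightarrow> x \<in> Vs \<and> x = y"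
| "walk Vs E (Suc m) x y \<longleftrightarrow> (\<exists>z\<in>Vs. E x z \<and> walk Vs E m z y)"

(* graph distance d_G(x,y): length of a shortest walk (used only on connected graphs) *)
definition gdist :: "'a set \<Rightarrow> ('a \<Rightarrow> 'a \<Rightarrow> bool) \<Rightarrow> 'a \<Rightarrow> 'a \<Rightarrow> nat" where
  "gdist Vs E x y = (LEAST m. walk Vs E m x y)"

definition connected_graph :: "'a set \<Rightarrow> ('a \<Rightarrow> 'a \<Rightarrow> bool) \<Rightarrow> bool" where
  "connected_graph Vs E \<longleftrightarrow> (\<forall>x\<in>Vs. \<forall>y\<in>Vs. \<exists>m. walk Vs E m x y)"

definition Wset :: "'a set \<Rightarrow> ('a \<Rightarrow> 'a \<Rightarrow> bool) \<Rightarrow> 'a \<Rightarrow> 'a \<Rightarrow> 'a set" where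
  "Wset Vs E x y = {w \<in> Vs. gdist Vs E w x < gdist Vs E w y}"

definition dist_balanced :: "nat \<Rightarrow> 'a set \<Rightarrow> ('a \<Rightarrow> 'a \<Rightarrow> bool) \<Rightarrow> bool" where
  "dist_balanced l Vs E \<longleftrightarrow>
     (\<forall>x\<in>Vs. \<forall>y\<in>Vs. gdist Vs E x y = l \<longrightarrow> card (Wset Vs E x y) = card (Wset Vs E y x))"

end

theory Submission
  imports Defs
begin
definition gA :: "int \<Rightarrow> int" where
  "gA m = (if m < 3 then m else m div 3 + 2 + m mod 3)"
definition gB :: "int \<Rightarrow> int" where
  "gB m = m div 3 + 1 + m mod 3"
definition gC :: "int \<Rightarrow> int" where
  "gC m = (if m mod 3 = 0 then m div 3 else m div 3 + 2 + m mod 3)"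

lemma d3: "(3*q + k) div 3 = q + k div 3" "(3*q + k) mod 3 = k mod 3" "(3*q) div 3 = q" "(3*q) mod 3 = 0"
  for q k :: int by presburger+
lemma d3m: "(3*q - k) div 3 = q + (-k) div 3" "(3*q - k) mod 3 = (-k) mod 3"
  for q k :: int by presburger+

lemma m3: fixes m :: int obtains q where "m = 3*q" | q where "m = 3*q+1" | q where "m = 3*q+2"
proof -
  have "m = 3*(m div 3) + m mod 3" by simp
  moreover have "m mod 3 = 0 \<or> m mod 3 = 1 \<or> m mod 3 = 2" by presburger
  ultimately show ?thesis using that by (metis add.right_neutral)
qed

lemma ml0: assumes "m \<ge> 0" shows "\<bar>gA (m+1) - gA m\<bar> \<le> 1"
  using assms by (cases m rule: m3; simp add: gA_def gB_def gC_def d3 d3m)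
lemma ml1: assumes "m \<ge> 0" shows "\<bar>gB (m+1) - gB m\<bar> \<le> 1"
  using assms by (cases m rule: m3; simp add: gA_def gB_def gC_def d3 d3m)
lemma ml2: assumes "m \<ge> 0" shows "\<bar>gB (m+3) - gB m\<bar> \<le> 1"
  using assms by (cases m rule: m3; simp add: gA_def gB_def gC_def d3 d3m)
lemma ml3: assumes "m \<ge> 0" shows "\<bar>gC (m+3) - gC m\<bar> \<le> 1"
  using assms by (cases m rule: m3; simp add: gA_def gB_def gC_def d3 d3m)
lemma ml4: assumes "m \<ge> 0" shows "\<bar>gA m - gB m\<bar> \<le> 1"
  using assms by (cases m rule: m3; simp add: gA_def gB_def gC_def d3 d3m)
lemma ml5: assumes "m \<ge> 0" shows "\<bar>gB m - gC m\<bar> \<le> 1"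
  using assms by (cases m rule: m3; simp add: gA_def gB_def gC_def d3 d3m)
lemma ml6: assumes "m \<ge> 0" shows "gA m \<ge> 0"
  using assms by (cases m rule: m3; simp add: gA_def gB_def gC_def d3 d3m)
lemma ml7: assumes "m \<ge> 0" shows "gB m \<ge> 1"
  using assms by (cases m rule: m3; simp add: gA_def gB_def gC_def d3 d3m)
lemma ml8: assumes "m \<ge> 0" shows "gC m \<ge> 0"
  using assms by (cases m rule: m3; simp add: gA_def gB_def gC_def d3 d3m)
lemma ml9: assumes "m \<ge> 0" shows "gA m = 0 \<longleftrightarrow> m = 0"
  using assms by (cases m rule: m3; simp add: gA_def gB_def gC_def d3 d3m)
lemma ml10: assumes "m \<ge> 0" shows "gC m = 0 \<longleftrightarrow> m = 0"
  using assms by (cases m rule: m3; simp add: gA_def gB_def gC_def d3 d3m; presburger)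
lemma ml11: assumes "m \<ge> 0" shows "m > 0 \<Longrightarrow> gA(m-1)+1 = gA m \<or> gA(m+1)+1 = gA m \<or> gB m +1 = gA m"
  using assms by (cases m rule: m3; simp add: gA_def gB_def gC_def d3 d3m)
lemma ml12: assumes "m \<ge> 0" shows "(m \<ge> 1 \<and> gB(m-1)+1 = gB m) \<or> gB(m+1)+1 = gB m \<or> gC m + 1 = gB m"
  using assms by (cases m rule: m3; simp add: gA_def gB_def gC_def d3 d3m)
lemma ml13: assumes "m \<ge> 0" shows "(m \<ge> 3 \<and> gB(m-3)+1 = gB m) \<or> gB(m+3)+1 = gB m \<or> gA m + 1 = gB m"
  using assms by (cases m rule: m3; simp add: gA_def gB_def gC_def d3 d3m)
lemma ml14: assumes "m \<ge> 0" shows "m > 0 \<Longrightarrow> (m \<ge> 3 \<and> gC(m-3)+1 = gC m) \<or> gC(m+3)+1 = gC m \<or> gB m + 1 = gC m"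
  using assms by (cases m rule: m3; simp add: gA_def gB_def gC_def d3 d3m)
lemma ml15: assumes "m \<ge> 0" shows "(3 \<le> m \<Longrightarrow> gC m \<le> gA m)"
  using assms by (cases m rule: m3; simp add: gA_def gB_def gC_def d3 d3m)
lemma ml16: assumes "m \<ge> 0" shows "gC m \<le> gA m + 2"
  using assms by (cases m rule: m3; simp add: gA_def gB_def gC_def d3 d3m)
lemma ml17: assumes "m \<ge> 0" shows "3 \<le> m \<Longrightarrow> (m+1) div 3 + 2 \<le> gA m"
  using assms by (cases m rule: m3; simp add: gA_def gB_def gC_def d3 d3m)

definition FA :: "int \<Rightarrow> nat" where "FA t = nat (gA \<bar>t\<bar>)"
definition FB :: "int \<Rightarrow> nat" where "FB t = nat (gB \<bar>t\<bar>)"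
definition FC :: "int \<Rightarrow> nat" where "FC t = nat (gC \<bar>t\<bar>)"
lemma FA_int: "int (FA t) = gA \<bar>t\<bar>" using ml6[of "\<bar>t\<bar>"] by (simp add: FA_def)
lemma FB_int: "int (FB t) = gB \<bar>t\<bar>" using ml7[of "\<bar>t\<bar>"] by (simp add: FB_def)
lemma FC_int: "int (FC t) = gC \<bar>t\<bar>" using ml8[of "\<bar>t\<bar>"] by (simp add: FC_def)

lemma A_lip: "FA t \<le> FA (t+1) + 1 \<and> FA (t+1) \<le> FA t + 1"
proof (cases "t \<ge> 0")
  case True then show ?thesis using ml0[of t] FA_int[of t] FA_int[of "t+1"] by (simp add: abs_le_iff; linarith)
next
  case False then show ?thesis using ml0[of "-t-1"] FA_int[of t] FA_int[of "t+1"] by (simp add: abs_le_iff; linarith)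
qed

lemma B_lip1: "FB t \<le> FB (t+1) + 1 \<and> FB (t+1) \<le> FB t + 1"
proof (cases "t \<ge> 0")
  case True then show ?thesis using ml1[of t] FB_int[of t] FB_int[of "t+1"] by (simp add: abs_le_iff; linarith)
next
  case False then show ?thesis using ml1[of "-t-1"] FB_int[of t] FB_int[of "t+1"] by (simp add: abs_le_iff; linarith)
qed

lemma B_lip3: "FB t \<le> FB (t+3) + 1 \<and> FB (t+3) \<le> FB t + 1"
proof -
  consider "t \<ge> 0" | "t \<le> -3" | "t = -1" | "t = -2" by linarith
  then show ?thesis
  proof cases
    case 1 then show ?thesis using ml2[of t] FB_int[of t] FB_int[of "t+3"] by (simp add: abs_le_iff; linarith)
  next
    case 2 then show ?thesis using ml2[of "-t-3"] FB_int[of t] FB_int[of "t+3"] by (simp add: abs_le_iff; linarith)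
  qed (simp_all add: FB_def gB_def)
qed

lemma C_lip3: "FC t \<le> FC (t+3) + 1 \<and> FC (t+3) \<le> FC t + 1"
proof -
  consider "t \<ge> 0" | "t \<le> -3" | "t = -1" | "t = -2" by linarith
  then show ?thesis
  proof cases
    case 1 then show ?thesis using ml3[of t] FC_int[of t] FC_int[of "t+3"] by (simp add: abs_le_iff; linarith)
  next
    case 2 then show ?thesis using ml3[of "-t-3"] FC_int[of t] FC_int[of "t+3"] by (simp add: abs_le_iff; linarith)
  qed (simp_all add: FC_def gC_def)
qed

lemma AB: "FA t \<le> FB t + 1 \<and> FB t \<le> FA t + 1"
  using ml4[of "\<bar>t\<bar>"] FA_int[of t] FB_int[of t] by (simp add: abs_le_iff; linarith)
lemma BC: "FC t \<le> FB t + 1 \<and> FB t \<le> FC t + 1"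
  using ml5[of "\<bar>t\<bar>"] FC_int[of t] FB_int[of t] by (simp add: abs_le_iff; linarith)

lemma A_zero: "FA t = 0 \<Longrightarrow> t = 0"
  using ml9[of "\<bar>t\<bar>"] FA_int[of t] by simp
lemma C_zero: "FC t = 0 \<Longrightarrow> t = 0"
  using ml10[of "\<bar>t\<bar>"] FC_int[of t] by simp
lemma B_pos: "FB t > 0"
  using ml7[of "\<bar>t\<bar>"] FB_int[of t] by simp


lemma natdisj: "int a + 1 = int b \<or> int c + 1 = int b \<or> int d + 1 = int b \<Longrightarrow> Suc a = b \<or> Suc c = b \<or> Suc d = b"
  by linarith

lemma A_desc: "FA t > 0 \<Longrightarrow> FA (t+1) + 1 = FA t \<or> FA (t-1) + 1 = FA t \<or> FB t + 1 = FA t"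
proof -
  assume p: "FA t > 0"
  then have "t \<noteq> 0" by (auto simp: FA_def gA_def)
  have "gA \<bar>t+1\<bar> + 1 = gA \<bar>t\<bar> \<or> gA \<bar>t-1\<bar> + 1 = gA \<bar>t\<bar> \<or> gB \<bar>t\<bar> + 1 = gA \<bar>t\<bar>"
  proof (cases "t > 0")
    case True then show ?thesis using ml11[of t] by auto
  next
    case False
    then have "\<bar>t+1\<bar> = -t - 1" "\<bar>t-1\<bar> = -t+1" "\<bar>t\<bar> = -t" using \<open>t \<noteq> 0\<close> by auto
    then show ?thesis using ml11[of "-t"] False \<open>t \<noteq> 0\<close> by auto
  qed
  then show ?thesis unfolding FA_int[symmetric] FB_int[symmetric] using natdisj by simp
qed

lemma B_descV0: "FB (t+1) + 1 = FB t \<or> FB (t-1) + 1 = FB t \<or> FC t + 1 = FB t"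
proof -
  have "gB \<bar>t+1\<bar> + 1 = gB \<bar>t\<bar> \<or> gB \<bar>t-1\<bar> + 1 = gB \<bar>t\<bar> \<or> gC \<bar>t\<bar> + 1 = gB \<bar>t\<bar>"
  proof (cases "t \<ge> 0")
    case True then show ?thesis using ml12[of t] by auto
  next
    case False
    then have "\<bar>t+1\<bar> = -t - 1" "\<bar>t-1\<bar> = -t+1" "\<bar>t\<bar> = -t" by auto
    then show ?thesis using ml12[of "-t"] False by auto
  qed
  then show ?thesis unfolding FC_int[symmetric] FB_int[symmetric] using natdisj by simp
qed

lemma B_descU0: "FB (t+3) + 1 = FB t \<or> FB (t-3) + 1 = FB t \<or> FA t + 1 = FB t"
proof -
  have "gB \<bar>t+3\<bar> + 1 = gB \<bar>t\<bar> \<or> gB \<bar>t-3\<bar> + 1 = gB \<bar>t\<bar> \<or> gA \<bar>t\<bar> + 1 = gB \<bar>t\<bar>"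
  proof -
    consider "t \<ge> 3" | "t \<le> -3" | "t \<in> {-2,-1,0,1,2}" by force
    then show ?thesis
    proof cases
      case 1
      then have "\<bar>t+3\<bar> = t+3" "\<bar>t-3\<bar> = t-3" "\<bar>t\<bar> = t" by auto
      then show ?thesis using ml13[of t] 1 by auto
    next
      case 2
      then have "\<bar>t+3\<bar> = -t - 3" "\<bar>t-3\<bar> = -t+3" "\<bar>t\<bar> = -t" by auto
      then show ?thesis using ml13[of "-t"] 2 by auto
    next
      case 3 then show ?thesis by (auto simp: gA_def gB_def)
    qed
  qed
  then show ?thesis unfolding FA_int[symmetric] FB_int[symmetric] using natdisj by simp
qed

lemma C_desc: "FC t > 0 \<Longrightarrow> FC (t+3) + 1 = FC t \<or> FC (t-3) + 1 = FC t \<or> FB t + 1 = FC t"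
proof -
  assume p: "FC t > 0"
  then have "t \<noteq> 0" by (auto simp: FC_def gC_def)
  have "gC \<bar>t+3\<bar> + 1 = gC \<bar>t\<bar> \<or> gC \<bar>t-3\<bar> + 1 = gC \<bar>t\<bar> \<or> gB \<bar>t\<bar> + 1 = gC \<bar>t\<bar>"
  proof -
    consider "t \<ge> 3" | "t \<le> -3" | "t \<in> {-2,-1,1,2}" using \<open>t \<noteq> 0\<close> by force
    then show ?thesis
    proof cases
      case 1
      then have "\<bar>t+3\<bar> = t+3" "\<bar>t-3\<bar> = t-3" "\<bar>t\<bar> = t" by auto
      then show ?thesis using ml14[of t] 1 by auto
    next
      case 2
      then have "\<bar>t+3\<bar> = -t - 3" "\<bar>t-3\<bar> = -t+3" "\<bar>t\<bar> = -t" by auto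
      then show ?thesis using ml14[of "-t"] 2 by auto
    next
      case 3 then show ?thesis by (auto simp: gC_def gB_def)
    qed
  qed
  then show ?thesis unfolding FC_int[symmetric] FB_int[symmetric] using natdisj by simp
qed

lemma CA2: "FC t \<le> FA t + 2"
  using ml16[of "\<bar>t\<bar>"] FA_int[of t] FC_int[of t] by simp
lemma CA3: "\<bar>t\<bar> \<ge> 3 \<Longrightarrow> FC t \<le> FA t"
  using ml15[of "\<bar>t\<bar>"] FA_int[of t] FC_int[of t] by simp
lemma A_lb: "\<bar>t\<bar> \<ge> 3 \<Longrightarrow> (\<bar>t\<bar>+1) div 3 + 2 \<le> int (FA t)"
  using ml17[of "\<bar>t\<bar>"] FA_int[of t] by simp

lemma walk_lb:
  assumes "\<phi> x = 0" "\<And>w z. E w z \<Longrightarrow> \<phi> w \<le> \<phi> z + 1"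
  shows "walk Vs E m w x \<Longrightarrow> \<phi> w \<le> m"
proof (induction m arbitrary: w)
  case 0 then show ?case using assms by simp
next
  case (Suc m)
  then obtain z where "E w z" "walk Vs E m z x" by auto
  then have "\<phi> z \<le> m" using Suc.IH by blast
  then show ?case using assms(2)[of w z] \<open>E w z\<close> by simp
qed

lemma walk_ex:
  assumes "x \<in> Vs" "\<forall>w\<in>Vs. \<phi> w = 0 \<longrightarrow> w = x"
    "\<forall>w\<in>Vs. 0 < \<phi> w \<longrightarrow> (\<exists>z\<in>Vs. E w z \<and> \<phi> z + 1 = \<phi> w)"
  shows "w \<in> Vs \<Longrightarrow> \<phi> w = m \<Longrightarrow> walk Vs E m w x"
proof (induction m arbitrary: w)
  case 0 then show ?case using assms by auto
next
  case (Suc m)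
  then obtain z where "z \<in> Vs" "E w z" "\<phi> z = m" using assms(3) by fastforce
  then show ?case using Suc.IH by auto
qed

lemma gdist_pot:
  assumes "x \<in> Vs" "\<phi> x = 0" "\<forall>w\<in>Vs. \<phi> w = 0 \<longrightarrow> w = x"
    "\<And>w z. E w z \<Longrightarrow> \<phi> w \<le> \<phi> z + 1"
    "\<forall>w\<in>Vs. 0 < \<phi> w \<longrightarrow> (\<exists>z\<in>Vs. E w z \<and> \<phi> z + 1 = \<phi> w)"
    "w \<in> Vs"
  shows "gdist Vs E w x = \<phi> w"
  unfolding gdist_def
proof (rule Least_equality)
  show "walk Vs E (\<phi> w) w x" using walk_ex[OF assms(1,3,5) assms(6)] by simp
next
  fix m assume "walk Vs E m w x"
  then show "\<phi> w \<le> m" using walk_lb[of \<phi> x E] assms(2,4) by blast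
qed

definition ml :: "nat \<Rightarrow> (int \<Rightarrow> nat) \<Rightarrow> nat \<Rightarrow> nat" where
  "ml n F i = (LEAST m. \<exists>t. t mod int n = int i mod int n \<and> F t = m)"

lemma ml_le: "t mod int n = int i mod int n \<Longrightarrow> ml n F i \<le> F t"
  unfolding ml_def by (rule Least_le) blast

lemma ml_ex: "\<exists>t. t mod int n = int i mod int n \<and> F t = ml n F i"
proof -
  have "\<exists>m t. t mod int n = int i mod int n \<and> F t = m" by blast
  from LeastI_ex[OF this] show ?thesis unfolding ml_def by blast
qed

lemma ml_ge: "(\<And>t. t mod int n = int i mod int n \<Longrightarrow> L \<le> F t) \<Longrightarrow> L \<le> ml n F i"
  using ml_ex[of n i F] by metis

lemma ml_lip:
  assumes "\<And>t. F t \<le> G (t + d) + c" "(int i + d) mod int n = int j mod int n"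
  shows "ml n F i \<le> ml n G j + c"
proof -
  obtain t where t: "t mod int n = int j mod int n" "G t = ml n G j" using ml_ex by blast
  have "int n dvd (t - int j)" "int n dvd (int i + d - int j)"
    using t(1) assms(2) by (simp_all add: mod_eq_dvd_iff)
  moreover have "(t - d) - int i = (t - int j) - (int i + d - int j)" by simp
  ultimately have "int n dvd ((t - d) - int i)" by (metis dvd_diff)
  then have "(t - d) mod int n = int i mod int n" by (simp add: mod_eq_dvd_iff)
  then have "ml n F i \<le> F (t - d)" by (rule ml_le)
  also have "\<dots> \<le> G t + c" using assms(1)[of "t - d"] by simp
  finally show ?thesis using t(2) by simp
qed


definition pot :: "nat \<Rightarrow> (int \<Rightarrow> nat) \<Rightarrow> (int \<Rightarrow> nat) \<Rightarrow> gp_vertex \<Rightarrow> nat" where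
  "pot n FU FV w = (case w of U i \<Rightarrow> ml n FU i | V i \<Rightarrow> ml n FV i)"

lemma verts: "U i \<in> gp_verts n \<longleftrightarrow> i < n" "V i \<in> gp_verts n \<longleftrightarrow> i < n"
  by (auto simp: gp_verts_def)

lemma adj_sym: "gp_adj n k x y \<Longrightarrow> gp_adj n k y x"
  unfolding gp_adj_def by (simp only: insert_commute[of y x])

lemma adjU1: "i < n \<Longrightarrow> gp_adj n 3 (U i) (U ((i+1) mod n))"
  unfolding gp_adj_def verts by auto
lemma adjV3: "i < n \<Longrightarrow> gp_adj n 3 (V i) (V ((i+3) mod n))"
  unfolding gp_adj_def verts by auto
lemma adjUV: "i < n \<Longrightarrow> gp_adj n 3 (U i) (V i)"
  unfolding gp_adj_def verts by auto

lemma predk: fixes i n k :: nat assumes "k \<le> n" "i < n" shows "((i + n - k) mod n + k) mod n = i"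
proof -
  have "((i + n - k) mod n + k) mod n = (i + n - k + k) mod n" by (rule mod_add_left_eq)
  also have "i + n - k + k = i + n" using assms by simp
  finally show ?thesis using assms by simp
qed

lemma shift_mod:
  assumes "t mod int n = int i mod int n" "int j mod int n = (int i + d) mod int n"
  shows "(t + d) mod int n = int j mod int n"
proof -
  have "int n dvd (t - int i)" "int n dvd (int j - (int i + d))"
    using assms by (simp_all add: mod_eq_dvd_iff)
  moreover have "(t + d) - int j = (t - int i) - (int j - (int i + d))" by simp
  ultimately have "int n dvd ((t + d) - int j)" by (metis dvd_diff)
  then show ?thesis by (simp add: mod_eq_dvd_iff)
qed

lemma jplus: "int ((i + k) mod n) mod int n = (int i + int k) mod int n"
  by (simp add: zmod_int)

lemma jminus: assumes "k \<le> n" shows "int ((i + n - k) mod n) mod int n = (int i + - int k) mod int n"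
proof -
  have "int ((i + n - k) mod n) mod int n = int (i + n - k) mod int n" by (simp add: zmod_int)
  also have "int (i + n - k) = (int i + - int k) + int n" using assms by simp
  also have "((int i + - int k) + int n) mod int n = (int i + - int k) mod int n" by simp
  finally show ?thesis .
qed

lemma pot_lip:
  assumes lU: "\<And>t. FU t \<le> FU (t+1) + 1 \<and> FU (t+1) \<le> FU t + 1"
      and lV: "\<And>t. FV t \<le> FV (t+3) + 1 \<and> FV (t+3) \<le> FV t + 1"
      and lX: "\<And>t. FU t \<le> FV t + 1 \<and> FV t \<le> FU t + 1"
      and adj: "gp_adj n 3 w z"
  shows "pot n FU FV w \<le> pot n FU FV z + 1"
proof -
  from adj obtain i where i: "i < n" and c: "{w,z} = {U i, U ((i+1) mod n)} \<or> {w,z} = {V i, V ((i+3) mod n)} \<or> {w,z} = {U i, V i}"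
    unfolding gp_adj_def by blast
  have u1: "ml n FU i \<le> ml n FU ((i+1) mod n) + 1"
    by (rule ml_lip[where d=1]) (use lU jplus[of i 1 n] in auto)
  have u2: "ml n FU ((i+1) mod n) \<le> ml n FU i + 1"
  proof (rule ml_lip[where d="-1"])
    show "FU t \<le> FU (t + - 1) + 1" for t using lU[of "t - 1"] by simp
    show "(int ((i + 1) mod n) + - 1) mod int n = int i mod int n"
      by (simp add: zmod_int mod_add_left_eq mod_diff_left_eq)
  qed
  have v1: "ml n FV i \<le> ml n FV ((i+3) mod n) + 1"
    by (rule ml_lip[where d=3]) (use lV jplus[of i 3 n] in auto)
  have v2: "ml n FV ((i+3) mod n) \<le> ml n FV i + 1"
  proof (rule ml_lip[where d="-3"])
    show "FV t \<le> FV (t + - 3) + 1" for t using lV[of "t - 3"] by simp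
    show "(int ((i + 3) mod n) + - 3) mod int n = int i mod int n"
      by (simp add: zmod_int mod_add_left_eq mod_diff_left_eq)
  qed
  have x1: "ml n FU i \<le> ml n FV i + 1"
    by (rule ml_lip[where d=0]) (use lX in auto)
  have x2: "ml n FV i \<le> ml n FU i + 1"
    by (rule ml_lip[where d=0]) (use lX in auto)
  show ?thesis using c u1 u2 v1 v2 x1 x2 by (auto simp: doubleton_eq_iff pot_def)
qed


lemma pot_desc:
  assumes lU: "\<And>t. FU t \<le> FU (t+1) + 1 \<and> FU (t+1) \<le> FU t + 1"
      and lV: "\<And>t. FV t \<le> FV (t+3) + 1 \<and> FV (t+3) \<le> FV t + 1"
      and lX: "\<And>t. FU t \<le> FV t + 1 \<and> FV t \<le> FU t + 1"
      and dU: "\<And>t. FU t > 0 \<Longrightarrow> FU (t+1) + 1 = FU t \<or> FU (t-1) + 1 = FU t \<or> FV t + 1 = FU t"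
      and dV: "\<And>t. FV t > 0 \<Longrightarrow> FV (t+3) + 1 = FV t \<or> FV (t-3) + 1 = FV t \<or> FU t + 1 = FV t"
      and n: "n \<ge> 3" and w: "w \<in> gp_verts n" and p: "pot n FU FV w > 0"
  shows "\<exists>z\<in>gp_verts n. gp_adj n 3 w z \<and> pot n FU FV z + 1 = pot n FU FV w"
proof -
  let ?p = "pot n FU FV"
  have fin: "?p z + 1 = ?p w" if "gp_adj n 3 w z" "?p z + 1 \<le> ?p w" for z
    using pot_lip[OF lU lV lX that(1)] that(2) by linarith
  have zin: "z \<in> gp_verts n" if "gp_adj n 3 w z" for z using that unfolding gp_adj_def by blast
  have good: "\<exists>z\<in>gp_verts n. gp_adj n 3 w z \<and> ?p z + 1 = ?p w" if "gp_adj n 3 w z" "?p z + 1 \<le> ?p w" for z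
    using fin[OF that] zin[OF that(1)] that(1) by blast
  show ?thesis
  proof (cases w)
    case (U i)
    then have i: "i < n" using w verts by simp
    obtain t where t: "t mod int n = int i mod int n" "FU t = ml n FU i" using ml_ex by blast
    have pw: "?p w = FU t" using U t by (simp add: pot_def)
    then have "FU t > 0" using p by simp
    from dU[OF this] consider "FU (t+1) + 1 = FU t" | "FU (t-1) + 1 = FU t" | "FV t + 1 = FU t" by blast
    then show ?thesis
    proof cases
      case 1
      let ?z = "U ((i+1) mod n)"
      have "?p ?z \<le> FU (t+1)" unfolding pot_def
        using ml_le[OF shift_mod[OF t(1) jplus[of i 1 n]]] by simp
      then show ?thesis using good[of ?z] adjU1[OF i] U 1 pw by simp
    next
      case 2
      let ?j = "(i + n - 1) mod n"
      have "?p (U ?j) \<le> FU (t-1)" unfolding pot_def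
        using ml_le[OF shift_mod[OF t(1) jminus[of 1 n i]]] n by simp
      moreover have "gp_adj n 3 (U i) (U ?j)"
        using adj_sym[OF adjU1[of ?j n]] predk[of 1 n i] i n by simp
      ultimately show ?thesis using good[of "U ?j"] U 2 pw by simp
    next
      case 3
      have "?p (V i) \<le> FV t" unfolding pot_def using ml_le[OF t(1)] by simp
      then show ?thesis using good[of "V i"] adjUV[OF i] U 3 pw by simp
    qed
  next
    case (V i)
    then have i: "i < n" using w verts by simp
    obtain t where t: "t mod int n = int i mod int n" "FV t = ml n FV i" using ml_ex by blast
    have pw: "?p w = FV t" using V t by (simp add: pot_def)
    then have "FV t > 0" using p by simp
    from dV[OF this] consider "FV (t+3) + 1 = FV t" | "FV (t-3) + 1 = FV t" | "FU t + 1 = FV t" by blast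
    then show ?thesis
    proof cases
      case 1
      let ?z = "V ((i+3) mod n)"
      have "?p ?z \<le> FV (t+3)" unfolding pot_def
        using ml_le[OF shift_mod[OF t(1) jplus[of i 3 n]]] by simp
      then show ?thesis using good[of ?z] adjV3[OF i] V 1 pw by simp
    next
      case 2
      let ?j = "(i + n - 3) mod n"
      have "?p (V ?j) \<le> FV (t-3)" unfolding pot_def
        using ml_le[OF shift_mod[OF t(1) jminus[of 3 n i]]] n by simp
      moreover have "gp_adj n 3 (V i) (V ?j)"
        using adj_sym[OF adjV3[of ?j n]] predk[of 3 n i] i n by simp
      ultimately show ?thesis using good[of "V ?j"] V 2 pw by simp
    next
      case 3
      have "?p (U i) \<le> FU t" unfolding pot_def using ml_le[OF t(1)] by simp
      then show ?thesis using good[of "U i"] adj_sym[OF adjUV[OF i]] V 3 pw by simp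
    qed
  qed
qed


lemma distU:
  assumes n: "n \<ge> 3" and w: "w \<in> gp_verts n"
  shows "gdist (gp_verts n) (gp_adj n 3) w (U 0) = pot n FA FB w"
proof (rule gdist_pot[OF _ _ _ _ _ w])
  show "U 0 \<in> gp_verts n" using n by (simp add: verts)
  show "pot n FA FB (U 0) = 0" using ml_le[of 0 n 0 FA] by (simp add: pot_def FA_def gA_def)
  show "\<forall>w\<in>gp_verts n. pot n FA FB w = 0 \<longrightarrow> w = U 0"
  proof (intro ballI impI)
    fix w assume w: "w \<in> gp_verts n" and z: "pot n FA FB w = 0"
    show "w = U 0"
    proof (cases w)
      case (U i)
      obtain t where t: "t mod int n = int i mod int n" "FA t = ml n FA i" using ml_ex by blast
      then have "t = 0" using z U A_zero by (simp add: pot_def)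
      then have "int i mod int n = 0" using t by simp
      then show ?thesis using U w verts by simp
    next
      case (V i)
      obtain t where t: "t mod int n = int i mod int n" "FB t = ml n FB i" using ml_ex by blast
      then show ?thesis using z V B_pos[of t] by (simp add: pot_def)
    qed
  qed
  show "gp_adj n 3 x y \<Longrightarrow> pot n FA FB x \<le> pot n FA FB y + 1" for x y
    by (rule pot_lip[OF A_lip B_lip3 AB])
  show "\<forall>w\<in>gp_verts n. 0 < pot n FA FB w \<longrightarrow> (\<exists>z\<in>gp_verts n. gp_adj n 3 w z \<and> pot n FA FB z + 1 = pot n FA FB w)"
    using pot_desc[OF A_lip B_lip3 AB A_desc B_descU0 n] by blast
qed

lemma BC': "FB t \<le> FC t + 1 \<and> FC t \<le> FB t + 1" using BC by simp

lemma distV: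
  assumes n: "n \<ge> 3" and w: "w \<in> gp_verts n"
  shows "gdist (gp_verts n) (gp_adj n 3) w (V 0) = pot n FB FC w"
proof (rule gdist_pot[OF _ _ _ _ _ w])
  show "V 0 \<in> gp_verts n" using n by (simp add: verts)
  show "pot n FB FC (V 0) = 0" using ml_le[of 0 n 0 FC] by (simp add: pot_def FC_def gC_def)
  show "\<forall>w\<in>gp_verts n. pot n FB FC w = 0 \<longrightarrow> w = V 0"
  proof (intro ballI impI)
    fix w assume w: "w \<in> gp_verts n" and z: "pot n FB FC w = 0"
    show "w = V 0"
    proof (cases w)
      case (V i)
      obtain t where t: "t mod int n = int i mod int n" "FC t = ml n FC i" using ml_ex by blast
      then have "t = 0" using z V C_zero by (simp add: pot_def)
      then have "int i mod int n = 0" using t by simp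
      then show ?thesis using V w verts by simp
    next
      case (U i)
      obtain t where t: "t mod int n = int i mod int n" "FB t = ml n FB i" using ml_ex by blast
      then show ?thesis using z U B_pos[of t] by (simp add: pot_def)
    qed
  qed
  show "gp_adj n 3 x y \<Longrightarrow> pot n FB FC x \<le> pot n FB FC y + 1" for x y
    by (rule pot_lip[OF B_lip1 C_lip3 BC'])
  show "\<forall>w\<in>gp_verts n. 0 < pot n FB FC w \<longrightarrow> (\<exists>z\<in>gp_verts n. gp_adj n 3 w z \<and> pot n FB FC z + 1 = pot n FB FC w)"
    using pot_desc[OF B_lip1 C_lip3 BC' B_descV0 C_desc n] by blast
qed


lemma lift_abs:
  assumes "t mod int n = int i mod int n" "i < n"
  shows "\<bar>t\<bar> \<ge> min (int i) (int n - int i)"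
proof -
  have "int n dvd (t - int i)" using assms(1) by (simp add: mod_eq_dvd_iff)
  then obtain k where k: "t - int i = int n * k" by (auto simp: dvd_def)
  consider "k = 0" | "k \<ge> 1" | "k \<le> -1" by linarith
  then show ?thesis
  proof cases
    case 1 then show ?thesis using k by simp
  next
    case 2
    then have "int n * 1 \<le> int n * k" by (intro mult_left_mono) auto
    then show ?thesis using k by simp
  next
    case 3
    then have "int n * k \<le> int n * (-1)" by (intro mult_left_mono) auto
    then show ?thesis using k assms(2) by simp
  qed
qed

definition kk :: "nat \<Rightarrow> nat \<Rightarrow> int" where "kk n i = int (ml n FC i) - int (ml n FA i)"

lemma kk_le2: "kk n i \<le> 2"
proof -
  have "ml n FC i \<le> ml n FA i + 2" by (rule ml_lip[where d=0]) (use CA2 in auto)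
  then show ?thesis unfolding kk_def by simp
qed

lemma kk0: "kk n 0 \<le> 0"
  using ml_le[of 0 n 0 FC] by (simp add: kk_def FC_def gC_def)

lemma kk_mid: assumes "3 \<le> i" "i + 3 \<le> n" shows "kk n i \<le> 0"
proof -
  obtain t where t: "t mod int n = int i mod int n" "FA t = ml n FA i" using ml_ex by blast
  have "\<bar>t\<bar> \<ge> 3" using lift_abs[OF t(1)] assms by linarith
  then have "FC t \<le> FA t" by (rule CA3)
  moreover have "ml n FC i \<le> FC t" by (rule ml_le[OF t(1)])
  ultimately show ?thesis using t(2) unfolding kk_def by simp
qed

lemma kk_neg:
  assumes s: "s mod int n = int i mod int n" and i: "i < n"
    and c: "int (FC s) + 2 \<le> (min (int i) (int n - int i) + 1) div 3 + 2" and m: "3 \<le> min (int i) (int n - int i)"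
  shows "kk n i \<le> -2"
proof -
  have "int (FC s) + 2 \<le> int (ml n FA i)"
  proof -
    obtain t where t: "t mod int n = int i mod int n" "FA t = ml n FA i" using ml_ex by blast
    have ta: "\<bar>t\<bar> \<ge> min (int i) (int n - int i)" by (rule lift_abs[OF t(1) i])
    then have "(min (int i) (int n - int i) + 1) div 3 \<le> (\<bar>t\<bar> + 1) div 3" by (intro zdiv_mono1) auto
    moreover have "(\<bar>t\<bar>+1) div 3 + 2 \<le> int (FA t)" using ta m by (intro A_lb) linarith
    ultimately show ?thesis using c t(2) by linarith
  qed
  moreover have "ml n FC i \<le> FC s" by (rule ml_le[OF s])
  ultimately show ?thesis unfolding kk_def by linarith
qed


lemma negmod: "k \<le> n \<Longrightarrow> (- int k) mod int n = int (n - k) mod int n"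
  by (simp add: mod_eq_dvd_iff of_nat_diff)

lemma kk_sum: assumes n: "n > 16" shows "(\<Sum>i<n. kk n i) < 0"
proof -
  define m where "m = n - 17"
  have nm: "n = m + 17" using n m_def by simp
  let ?S = "{0,1,2,3,6,9,n-6,n-3,n-2,n-1} :: nat set"
  have sub: "?S \<subseteq> {..<n}" using n by auto
  have split: "(\<Sum>i<n. kk n i) = (\<Sum>i\<in>{..<n} - ?S. kk n i) + (\<Sum>i\<in>?S. kk n i)"
    by (rule sum.subset_diff[OF sub]) simp
  have rest: "(\<Sum>i\<in>{..<n} - ?S. kk n i) \<le> 0"
  proof (rule sum_nonpos)
    fix i assume "i \<in> {..<n} - ?S"
    then have h: "i < n" "i \<noteq> 0" "i \<noteq> 1" "i \<noteq> 2" "i \<noteq> n-3" "i \<noteq> n-2" "i \<noteq> n-1" by simp_all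
    then have "3 \<le> i" "i + 3 \<le> n" using n by presburger+
    then show "kk n i \<le> 0" by (rule kk_mid)
  qed
  have e: "(\<Sum>i\<in>?S. kk n i) = kk n 0 + kk n 1 + kk n 2 + kk n 3 + kk n 6 + kk n 9 + kk n (n-6) + kk n (n-3) + kk n (n-2) + kk n (n-1)"
    using nm by (simp add: ac_simps)
  have k3: "kk n 3 \<le> -2" by (rule kk_neg[where s=3]) (use n in \<open>simp_all add: FC_def gC_def\<close>)
  have k6: "kk n 6 \<le> -2" by (rule kk_neg[where s=6]) (use n in \<open>simp_all add: FC_def gC_def\<close>)
  have k9: "kk n 9 \<le> -2"
  proof (rule kk_neg[where s=9])
    have "min (int 9) (int n - int 9) \<ge> 8" using n by simp
    then have "(8 + 1) div 3 \<le> (min (int 9) (int n - int 9) + 1) div 3" by (intro zdiv_mono1) auto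
    then show "int (FC 9) + 2 \<le> (min (int 9) (int n - int 9) + 1) div 3 + 2" by (simp add: FC_def gC_def)
  qed (use n in simp_all)
  have k3': "kk n (n-3) \<le> -2"
  proof (rule kk_neg[where s="-3"])
    show "-3 mod int n = int (n - 3) mod int n" using negmod[of 3 n] n by simp
  qed (use n in \<open>simp_all add: FC_def gC_def of_nat_diff\<close>)
  have k6': "kk n (n-6) \<le> -2"
  proof (rule kk_neg[where s="-6"])
    show "-6 mod int n = int (n - 6) mod int n" using negmod[of 6 n] n by simp
  qed (use n in \<open>simp_all add: FC_def gC_def of_nat_diff\<close>)
  have "(\<Sum>i\<in>?S. kk n i) \<le> -2"
    using e k3 k6 k9 k3' k6' kk0[of n] kk_le2[of n 1] kk_le2[of n 2] kk_le2[of n "n-2"] kk_le2[of n "n-1"] by linarith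
  then show ?thesis using split rest by linarith
qed


lemma diff_bool: fixes a b :: nat
  assumes "a \<le> b + 1" "b \<le> a + 1"
  shows "int a - int b = of_bool (b < a) - of_bool (a < b)"
  using assms by (cases "a < b"; cases "b < a"; simp; linarith)

lemma sum_verts: "(\<Sum>w\<in>gp_verts n. g w) = (\<Sum>i<n. g (U i)) + (\<Sum>i<n. g (V i))"
proof -
  have "(\<Sum>w\<in>gp_verts n. g w) = (\<Sum>w\<in>U ` {..<n}. g w) + (\<Sum>w\<in>V ` {..<n}. g w)"
    unfolding gp_verts_def by (rule sum.union_disjoint) auto
  also have "\<dots> = (\<Sum>i<n. g (U i)) + (\<Sum>i<n. g (V i))"
    by (simp add: sum.reindex inj_on_def)
  finally show ?thesis .
qed

theorem proposition2p1:
  fixes n :: nat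
  assumes "n > 16"
  shows "\<not> dist_balanced 1 (gp_verts n) (gp_adj n 3)"
proof
  assume db: "dist_balanced 1 (gp_verts n) (gp_adj n 3)"
  let ?Vs = "gp_verts n" and ?E = "gp_adj n 3"
  let ?Du = "\<lambda>w. gdist ?Vs ?E w (U 0)" and ?Dv = "\<lambda>w. gdist ?Vs ?E w (V 0)"
  have n3: "n \<ge> 3" using assms by simp
  have inU: "U 0 \<in> ?Vs" "V 0 \<in> ?Vs" using n3 by (simp_all add: verts)
  have "ml n FB 0 \<le> 1" using ml_le[of 0 n 0 FB] by (simp add: FB_def gB_def)
  moreover have "1 \<le> ml n FB 0" by (rule ml_ge) (use B_pos in \<open>simp add: Suc_le_eq\<close>)
  ultimately have d1: "gdist ?Vs ?E (U 0) (V 0) = 1"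
    using distV[OF n3 inU(1)] by (simp add: pot_def)
  have ceq: "card (Wset ?Vs ?E (U 0) (V 0)) = card (Wset ?Vs ?E (V 0) (U 0))"
    using db inU d1 unfolding dist_balanced_def by blast
  have fin: "finite ?Vs" by (simp add: gp_verts_def)
  have bnd: "int (?Dv w) - int (?Du w) = of_bool (?Du w < ?Dv w) - of_bool (?Dv w < ?Du w)"
    if w: "w \<in> ?Vs" for w
  proof (cases w)
    case (U i)
    have "ml n FB i \<le> ml n FA i + 1" by (rule ml_lip[where d=0]) (use AB in auto)
    moreover have "ml n FA i \<le> ml n FB i + 1" by (rule ml_lip[where d=0]) (use AB in auto)
    ultimately show ?thesis using distU[OF n3 w] distV[OF n3 w] U diff_bool by (simp add: pot_def)
  next
    case (V i)
    have "ml n FB i \<le> ml n FC i + 1" by (rule ml_lip[where d=0]) (use BC in auto)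
    moreover have "ml n FC i \<le> ml n FB i + 1" by (rule ml_lip[where d=0]) (use BC in auto)
    ultimately show ?thesis using distU[OF n3 w] distV[OF n3 w] V diff_bool by (simp add: pot_def)
  qed
  have "(\<Sum>w\<in>?Vs. int (?Dv w) - int (?Du w)) = (\<Sum>w\<in>?Vs. of_bool (?Du w < ?Dv w) - of_bool (?Dv w < ?Du w))"
    using bnd by (rule sum.cong[OF refl])
  also have "\<dots> = (\<Sum>w\<in>?Vs. of_bool (?Du w < ?Dv w)) - (\<Sum>w\<in>?Vs. of_bool (?Dv w < ?Du w))"
    by (rule sum_subtractf)
  also have "\<dots> = int (card (Wset ?Vs ?E (U 0) (V 0))) - int (card (Wset ?Vs ?E (V 0) (U 0)))"
    using fin unfolding Wset_def by (simp add: Int_def)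
  finally have z: "(\<Sum>w\<in>?Vs. int (?Dv w) - int (?Du w)) = 0" using ceq by simp
  have "(\<Sum>w\<in>?Vs. int (?Dv w) - int (?Du w))
      = (\<Sum>i<n. int (?Dv (U i)) - int (?Du (U i))) + (\<Sum>i<n. int (?Dv (V i)) - int (?Du (V i)))"
    by (rule sum_verts)
  also have "\<dots> = (\<Sum>i<n. int (ml n FB i) - int (ml n FA i)) + (\<Sum>i<n. int (ml n FC i) - int (ml n FB i))"
    using distU[OF n3] distV[OF n3] by (simp add: verts pot_def)
  also have "\<dots> = (\<Sum>i<n. kk n i)"
    unfolding kk_def sum.distrib[symmetric] by (rule sum.cong) auto
  finally show False using z kk_sum[OF assms] by simp
qed

end
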